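(* Let $\alpha,\beta,\gamma,\delta\in\mathbb{C}$ be parameters for which all gamma functions and hypergeometric functions below are well-defined, and let $f(z)=f(\alpha,\beta,\gamma,\delta;z)$ be defined for $z\in\mathbb{C}\setminus\{0\}$ by $$f(\alpha,\beta,\gamma,\delta;z)=\sum_{\nu=0}^{\infty}\frac{z^{-\nu}\Gamma(\alpha+\gamma+\nu)}{\nu!\,\Gamma(\beta+\nu)}\,E\left(\begin{matrix}\alpha+1,&\beta+\nu\\ \delta,&\beta+1+\nu\end{matrix};z\right).$$ Then for all $z\neq 0$, $$-z f'(z)+\beta f(z)=E(\alpha+1;\delta;z)\,E(\alpha+\gamma;\beta;-z).$$
   Context: For complex parameters $a_1,\dots,a_p$, $b_1,\dots,b_q$ with $p\le q$ and $z\in\mathbb{C}\setminus\{0\}$, the MacRobert $E$-function is $$E\left(\begin{matrix}a_1,\dots,a_p\\ b_1,\dots,b_q\end{matrix};z\right)=\frac{\prod_{j=1}^p\Gamma(a_j)}{\prod_{j=1}^q\Gamma(b_j)}\,{}_pF_q\left(\begin{matrix}a_1,\dots,a_p\\ b_1,\dots,b_q\end{matrix};-\frac1z\right),$$ where ${}_pF_q$ is the generalized hypergeometric function. In particular $E(a;b;z)=\frac{\Gamma(a)}{\Gamma(b)}M(a;b;-1/z)$ with $M={}_1F_1$ Kummer's function. *)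

theory Defs
  imports "HOL-Analysis.Analysis"
begin

definition hypF :: "complex list \<Rightarrow> complex list \<Rightarrow> complex \<Rightarrow> complex" where
  "hypF as bs z = (\<Sum>n. (prod_list (map (\<lambda>a. pochhammer a n) as)
                        / prod_list (map (\<lambda>b. pochhammer b n) bs)) * z ^ n / fact n)"

definition MacRobertE :: "complex list \<Rightarrow> complex list \<Rightarrow> complex \<Rightarrow> complex" where
  "MacRobertE as bs z = prod_list (map Gamma as) / prod_list (map Gamma bs)
                        * hypF as bs (- 1 / z)"

definition fE :: "complex \<Rightarrow> complex \<Rightarrow> complex \<Rightarrow> complex \<Rightarrow> complex \<Rightarrow> complex" where
  "fE \<alpha> \<beta> \<gamma> \<delta> z = (\<Sum>\<nu>. z powi (- int \<nu>) * Gamma (\<alpha> + \<gamma> + of_nat \<nu>)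
        / (fact \<nu> * Gamma (\<beta> + of_nat \<nu>))
        * MacRobertE [\<alpha> + 1, \<beta> + of_nat \<nu>] [\<delta>, \<beta> + 1 + of_nat \<nu>] z)"

end

theory Submission
  imports Defs
begin


lemma ratio_coeff_summable:
  fixes t :: "nat \<Rightarrow> complex" and a b x :: complex
  assumes rec: "\<And>n. t (Suc n) * ((b + of_nat n) * of_nat (Suc n)) = (a + of_nat n) * t n"
  shows "summable (\<lambda>n. norm (t n * x^n))"
proof -
  define N :: nat where "N = nat \<lceil>2 * norm b + norm a + 8 * norm x + 1\<rceil>"
  have key: "norm (t (Suc n) * x^Suc n) \<le> 1/2 * norm (t n * x^n)" if "n \<ge> N" for n
  proof -
    have nN: "real n \<ge> 2 * norm b + norm a + 8 * norm x + 1"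
      using that unfolding N_def by linarith
    have h1: "norm (t (Suc n)) * (norm (b + of_nat n) * (real n + 1)) = norm (a + of_nat n) * norm (t n)"
      using arg_cong[OF rec[of n], of norm] unfolding norm_mult norm_of_nat by (simp add: add.commute)
    have nb: "norm (b + of_nat n) \<ge> real n / 2"
    proof -
      have "norm (of_nat n :: complex) - norm b \<le> norm (of_nat n + b)" by (rule norm_diff_ineq)
      then have "real n - norm b \<le> norm (b + of_nat n)" by (simp add: add.commute)
      then show ?thesis using nN norm_ge_zero[of a] norm_ge_zero[of x] by linarith
    qed
    have na: "norm (a + of_nat n) \<le> 2 * real n"
    proof -
      have "norm (a + of_nat n) \<le> norm a + norm (of_nat n :: complex)" by (rule norm_triangle_ineq)
      then have "norm (a + of_nat n) \<le> norm a + real n" by simp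
      then show ?thesis using nN norm_ge_zero[of b] norm_ge_zero[of x] by linarith
    qed
    have "norm (t (Suc n)) * (real n / 2 * (real n + 1)) \<le> norm (t (Suc n)) * (norm (b + of_nat n) * (real n + 1))"
      by (intro mult_left_mono mult_right_mono nb) auto
    also have "\<dots> \<le> 2 * real n * norm (t n)"
      using h1 mult_right_mono[OF na, of "norm (t n)"] by simp
    finally have h2: "norm (t (Suc n)) * (real n / 2 * (real n + 1)) \<le> 2 * real n * norm (t n)" .
    have npos: "real n > 0" using nN using norm_ge_zero[of a] norm_ge_zero[of b] norm_ge_zero[of x] by linarith
    have h3: "norm (t (Suc n)) * (real n + 1) \<le> 4 * norm (t n)"
    proof -
      have "real n * (norm (t (Suc n)) * (real n + 1)) \<le> real n * (4 * norm (t n))"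
        using h2 by (simp add: algebra_simps)
      then show ?thesis using npos by simp
    qed
    have h4: "norm (t (Suc n)) * norm x \<le> 1/2 * norm (t n)"
    proof -
      have "8 * norm x \<le> real n + 1" using nN norm_ge_zero[of a] norm_ge_zero[of b] by linarith
      then have "norm (t (Suc n)) * (8 * norm x) \<le> norm (t (Suc n)) * (real n + 1)"
        by (intro mult_left_mono) auto
      then show ?thesis using h3 by linarith
    qed
    show ?thesis
      using mult_right_mono[OF h4, of "norm x ^ n"] by (simp add: norm_mult norm_power mult_ac)
  qed
  show ?thesis
    by (rule summable_ratio_test[of "1/2" N]) (use key in auto)
qed



lemma abs_summable_from_product:
  fixes G :: "nat \<Rightarrow> nat \<Rightarrow> complex" and A B :: "nat \<Rightarrow> real"
  assumes "summable A" "summable B" "\<And>i. A i \<ge> 0" "\<And>j. B j \<ge> 0"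
    and "\<And>i j. norm (G i j) \<le> A i * B j"
  shows "(\<lambda>p. norm (G (fst p) (snd p))) summable_on UNIV"
proof -
  have "(\<lambda>p. A (fst p) * B (snd p)) summable_on Sigma UNIV (\<lambda>_. UNIV)"
  proof (rule summable_on_SigmaI)
    show "((\<lambda>y. A (fst (i, y)) * B (snd (i, y))) has_sum (A i * suminf B)) UNIV" for i
      using sums_nonneg_imp_has_sum[OF sums_mult[OF summable_sums[OF assms(2)], of "A i"]] assms(3,4)
      by simp
    show "(\<lambda>i. A i * suminf B) summable_on UNIV"
      using summable_nonneg_imp_summable_on_strong[OF summable_mult2[OF assms(1), of "suminf B"]]
        assms(3) suminf_nonneg[OF assms(2,4)] by simp
  qed (use assms(3,4) in auto)
  then have "(\<lambda>p. A (fst p) * B (snd p)) summable_on UNIV" by simp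
  then show ?thesis
    by (rule Infinite_Sum.abs_summable_on_comparison_test') (use assms(5) in auto)
qed

lemma double_series:
  fixes G :: "nat \<Rightarrow> nat \<Rightarrow> complex"
  assumes abs: "(\<lambda>p. norm (G (fst p) (snd p))) summable_on UNIV"
  shows "\<exists>X. (\<lambda>i. \<Sum>j. G i j) sums X \<and> (\<lambda>n. \<Sum>i\<le>n. G i (n-i)) sums X"
proof -
  define H where "H = (\<lambda>p. G (fst p) (snd p))"
  have Hs: "H summable_on UNIV" using abs_summable_summable[OF abs] unfolding H_def .
  define X where "X = infsum H UNIV"
  have HX: "(H has_sum X) (Sigma UNIV (\<lambda>_. UNIV))" using Hs unfolding X_def by simp
  have slice: "(\<lambda>j. G i j) summable_on UNIV" for i
  proof -
    have "H summable_on (Pair i ` UNIV)" by (rule summable_on_subset_banach[OF Hs]) auto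
    then show ?thesis
      by (subst (asm) summable_on_reindex) (auto simp: H_def o_def inj_on_def)
  qed
  have 1: "((\<lambda>i. \<Sum>j. G i j) has_sum X) UNIV"
  proof (rule has_sum_Sigma'[OF HX])
    fix i :: nat
    have "((\<lambda>j. G i j) has_sum infsum (\<lambda>j. G i j) UNIV) UNIV" using slice by simp
    moreover have "(\<Sum>j. G i j) = infsum (\<lambda>j. G i j) UNIV"
      using has_sum_imp_sums[OF calculation] by (simp add: sums_iff)
    ultimately show "((\<lambda>y. H (i, y)) has_sum (\<Sum>j. G i j)) UNIV" by (simp add: H_def)
  qed
  define \<phi> where "\<phi> = (\<lambda>p::nat\<times>nat. (snd p, fst p - snd p))"
  have bij: "bij_betw \<phi> (Sigma UNIV (\<lambda>n. {..n})) UNIV"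
    by (rule bij_betwI[where g = "\<lambda>p. (fst p + snd p, fst p)"]) (auto simp: \<phi>_def)
  have "((\<lambda>p. H (\<phi> p)) has_sum X) (Sigma UNIV (\<lambda>n. {..n}))"
  proof -
    have "(\<lambda>p. H (\<phi> p)) summable_on (Sigma UNIV (\<lambda>n. {..n}))"
      using summable_on_reindex_bij_betw[OF bij] Hs by blast
    moreover have "infsum (\<lambda>p. H (\<phi> p)) (Sigma UNIV (\<lambda>n. {..n})) = X"
      unfolding X_def by (rule infsum_reindex_bij_betw[OF bij])
    ultimately show ?thesis by (metis has_sum_infsum)
  qed
  then have 2: "((\<lambda>n. \<Sum>i\<le>n. G i (n-i)) has_sum X) UNIV"
    by (rule has_sum_Sigma') (auto simp: H_def \<phi>_def)
  show ?thesis using has_sum_imp_sums[OF 1] has_sum_imp_sums[OF 2] by blast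
qed



definition Qc :: "complex \<Rightarrow> complex \<Rightarrow> nat \<Rightarrow> complex" where
  "Qc a b n = pochhammer a n / (pochhammer b n * fact n)"

lemma poch_nz: "(a::complex) \<notin> \<int>\<^sub>\<le>\<^sub>0 \<Longrightarrow> pochhammer a n \<noteq> 0"
  by (auto simp: pochhammer_eq_0_iff)

lemma Qc_rec:
  assumes "b \<notin> \<int>\<^sub>\<le>\<^sub>0"
  shows "Qc a b (Suc n) * ((b + of_nat n) * of_nat (Suc n)) = (a + of_nat n) * Qc a b n"
proof -
  have "pochhammer b (Suc n) \<noteq> 0" using poch_nz[OF assms] .
  then have "b + of_nat n \<noteq> 0" by (simp add: pochhammer_Suc)
  moreover have "pochhammer b n \<noteq> 0" using poch_nz[OF assms] .
  ultimately show ?thesis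
  proof -
    have nz: "(of_nat (Suc n) :: complex) \<noteq> 0" by (simp only: of_nat_eq_0_iff)
    have f: "(fact (Suc n)::complex) = of_nat (Suc n) * fact n" by (rule fact_Suc)
    show ?thesis unfolding Qc_def pochhammer_Suc f
      using nz \<open>b + of_nat n \<noteq> 0\<close> \<open>pochhammer b n \<noteq> 0\<close>
      by (simp add: divide_simps del: of_nat_Suc)
  qed
qed

lemma Qc_summable:
  assumes "b \<notin> \<int>\<^sub>\<le>\<^sub>0"
  shows "summable (\<lambda>n. norm (Qc a b n * x^n))"
  by (rule ratio_coeff_summable[of _ b a]) (rule Qc_rec[OF assms])

lemma lower_bound:
  fixes \<beta> :: complex
  assumes "\<And>n. \<beta> + of_nat n \<noteq> 0"
  shows "\<exists>m>0. \<forall>n. norm (\<beta> + of_nat n) \<ge> m"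
proof -
  define N :: nat where "N = nat \<lceil>norm \<beta> + 1\<rceil>"
  define S where "S = insert 1 ((\<lambda>n. norm (\<beta> + of_nat n)) ` {..<N})"
  have fin: "finite S" "S \<noteq> {}" unfolding S_def by auto
  have pos: "\<forall>s\<in>S. s > 0" unfolding S_def using assms by auto
  have "Min S > 0" using fin pos by simp
  moreover have "norm (\<beta> + of_nat n) \<ge> Min S" for n
  proof (cases "n < N")
    case True
    then show ?thesis using fin unfolding S_def by (intro Min_le) auto
  next
    case False
    then have "real n \<ge> norm \<beta> + 1" unfolding N_def by linarith
    moreover have "norm (of_nat n :: complex) - norm \<beta> \<le> norm (of_nat n + \<beta>)" by (rule norm_diff_ineq)
    ultimately have "norm (\<beta> + of_nat n) \<ge> 1" by (simp add: add.commute)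
    moreover have "Min S \<le> 1" using fin unfolding S_def by (intro Min_le) auto
    ultimately show ?thesis by linarith
  qed
  ultimately show ?thesis by blast
qed



lemma aux1: "(KA::complex) \<noteq> 0 \<Longrightarrow> bk \<noteq> 0 \<Longrightarrow> b \<noteq> 0 \<Longrightarrow> Y * b / bk = (KA * Y / bk) / (KA / b)"
  by (simp add: field_simps)
lemma e3: "(- 1 / (w::complex)) ^ k = (-1)^k * inverse w ^ k"
proof -
  have "- 1 / w = (-1) * inverse w" by (simp add: inverse_eq_divide)
  then show ?thesis by (simp only: power_mult_distrib)
qed
lemma aux2: "(pa::complex) * pb / (pd * pb1) * ((-1)^k * u ^ k) / (f::complex)
        = (pa / (pd * f)) * (-1)^k * u^k * (pb / pb1)"
  by (simp add: field_simps)

context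
  fixes \<alpha> \<beta> \<gamma> \<delta> :: complex
  assumes a1: "\<alpha> + 1 \<notin> \<int>\<^sub>\<le>\<^sub>0"
    and a2: "\<And>n::nat. \<alpha> + \<gamma> + of_nat n \<notin> \<int>\<^sub>\<le>\<^sub>0"
    and a3: "\<And>n::nat. \<beta> + of_nat n \<notin> \<int>\<^sub>\<le>\<^sub>0"
    and a4: "\<delta> \<notin> \<int>\<^sub>\<le>\<^sub>0"
begin

definition "cc n = Gamma (\<alpha> + \<gamma>) / Gamma \<beta> * Qc (\<alpha> + \<gamma>) \<beta> n"
definition "ee k = Gamma (\<alpha> + 1) / Gamma \<delta> * Qc (\<alpha> + 1) \<delta> k * (-1)^k"
definition "ss n = (\<Sum>i\<le>n. cc i * ee (n - i))"
definition "aa n = ss n / (\<beta> + of_nat n)"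
definition "gg x = (\<Sum>n. aa n * x^n)"

lemma b0: "\<beta> \<notin> \<int>\<^sub>\<le>\<^sub>0" using a3[of 0] by simp

lemma bnz: "\<beta> + of_nat n \<noteq> 0" using a3[of n] by auto

lemma cc_sum: "summable (\<lambda>n. norm (cc n * x^n))"
proof -
  have "summable (\<lambda>n. norm (Gamma (\<alpha> + \<gamma>) / Gamma \<beta>) * norm (Qc (\<alpha> + \<gamma>) \<beta> n * x^n))"
    by (rule summable_mult) (rule Qc_summable[OF b0])
  moreover have "norm (cc n * x^n) = norm (Gamma (\<alpha> + \<gamma>) / Gamma \<beta>) * norm (Qc (\<alpha> + \<gamma>) \<beta> n * x^n)" for n
    unfolding cc_def mult.assoc norm_mult ..
  ultimately show ?thesis by simp
qed

lemma ee_sum: "summable (\<lambda>n. norm (ee n * x^n))"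
proof -
  have "summable (\<lambda>n. norm (Gamma (\<alpha> + 1) / Gamma \<delta>) * norm (Qc (\<alpha> + 1) \<delta> n * (-x)^n))"
    by (rule summable_mult) (rule Qc_summable[OF a4])
  moreover have "ee n * x^n = Gamma (\<alpha> + 1) / Gamma \<delta> * (Qc (\<alpha> + 1) \<delta> n * (-x)^n)" for n
    unfolding ee_def power_minus[of x] by (simp only: mult.assoc)
  ultimately show ?thesis by (simp only: norm_mult)
qed

lemma mbound: "\<exists>m>0. \<forall>n. norm (\<beta> + of_nat n) \<ge> m"
  by (rule lower_bound) (rule bnz)

lemma ss_expand: "ss n * x^n = (\<Sum>i\<le>n. (cc i * x^i) * (ee (n - i) * x^(n - i)))"
  unfolding ss_def sum_distrib_right
proof (intro sum.cong refl)
  fix i assume "i \<in> {..n}"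
  then have eq: "x^n = x^i * x^(n-i)" by (simp flip: power_add)
  show "cc i * ee (n - i) * x ^ n = cc i * x ^ i * (ee (n - i) * x ^ (n - i))"
    unfolding eq by (simp only: mult_ac)
qed

lemma aa_summable: "summable (\<lambda>n. aa n * x^n)"
proof -
  obtain m where m: "m > 0" "\<And>n. norm (\<beta> + of_nat n) \<ge> m" using mbound by blast
  have S: "summable (\<lambda>n. (\<Sum>i\<le>n. norm (cc i * x^i) * norm (ee (n - i) * x^(n - i))) / m)"
    by (rule summable_divide, rule summable_Cauchy_product) (use cc_sum ee_sum in simp_all)
  have bnd: "norm (aa n * x^n) \<le> (\<Sum>i\<le>n. norm (cc i * x^i) * norm (ee (n - i) * x^(n - i))) / m" for n
  proof -
    have "norm (aa n * x^n) = norm (ss n * x^n) / norm (\<beta> + of_nat n)"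
      unfolding aa_def by (simp add: norm_mult norm_divide)
    also have "\<dots> \<le> norm (ss n * x^n) / m"
    proof (rule divide_left_mono)
      show "m \<le> norm (\<beta> + of_nat n)" by (rule m(2))
      show "0 < norm (\<beta> + of_nat n) * m" using m(1) m(2)[of n] by (intro mult_pos_pos) auto
    qed simp
    also have "norm (ss n * x^n) \<le> (\<Sum>i\<le>n. norm (cc i * x^i) * norm (ee (n - i) * x^(n - i)))"
      unfolding ss_expand by (rule order.trans[OF norm_sum]) (simp add: norm_mult)
    then have "norm (ss n * x^n) / m \<le> (\<Sum>i\<le>n. norm (cc i * x^i) * norm (ee (n - i) * x^(n - i))) / m"
      using m by (intro divide_right_mono) auto
    finally show ?thesis .
  qed
  show ?thesis
    by (rule summable_comparison_test'[OF S, of 0]) (rule bnd)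
qed

lemma Gnz: "Gamma (\<alpha> + 1) \<noteq> 0" "Gamma \<delta> \<noteq> 0" "Gamma \<beta> \<noteq> 0" "Gamma (\<alpha> + \<gamma>) \<noteq> 0"
  using Gamma_nonzero a1 a4 b0 a2[of 0] by auto

lemma target_summable:
  "summable (\<lambda>k. ee k * u ^ k / (\<beta> + of_nat (\<nu> + k)))"
proof -
  obtain m where m: "m > 0" "\<And>n. norm (\<beta> + of_nat n) \<ge> m" using mbound by blast
  have S: "summable (\<lambda>k. norm (ee k * u^k) / m)"
    by (rule summable_divide) (rule ee_sum)
  have bnd: "norm (ee k * u ^ k / (\<beta> + of_nat (\<nu> + k))) \<le> norm (ee k * u^k) / m" for k
  proof -
    have "norm (ee k * u ^ k / (\<beta> + of_nat (\<nu> + k))) = norm (ee k * u^k) / norm (\<beta> + of_nat (\<nu> + k))"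
      by (simp add: norm_divide)
    also have "\<dots> \<le> norm (ee k * u^k) / m"
    proof (rule divide_left_mono)
      show "m \<le> norm (\<beta> + of_nat (\<nu> + k))" by (rule m(2))
      show "0 < norm (\<beta> + of_nat (\<nu> + k)) * m" using m(1) m(2)[of "\<nu> + k"] by (intro mult_pos_pos) auto
    qed simp
    finally show ?thesis .
  qed
  show ?thesis
    by (rule summable_comparison_test'[OF S, of 0]) (rule bnd)
qed

lemma inner_E:
  assumes w: "w \<noteq> 0"
  shows "(\<lambda>k. ee k * inverse w ^ k / (\<beta> + of_nat (\<nu> + k))) sums
           MacRobertE [\<alpha> + 1, \<beta> + of_nat \<nu>] [\<delta>, \<beta> + 1 + of_nat \<nu>] w"
proof -
  define u where "u = inverse w"
  define b where "b = \<beta> + of_nat \<nu>"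
  define target where "target = (\<lambda>k. ee k * u ^ k / (\<beta> + of_nat (\<nu> + k)))"
  have tS: "summable target" unfolding target_def by (rule target_summable)
  have bZ: "b \<notin> \<int>\<^sub>\<le>\<^sub>0" unfolding b_def by (rule a3)
  have b1Z: "b + 1 \<notin> \<int>\<^sub>\<le>\<^sub>0" using a3[of "Suc \<nu>"] unfolding b_def by (simp add: add_ac)
  have bnz0: "b \<noteq> 0" using bnz[of \<nu>] unfolding b_def .
  have Gb: "Gamma b \<noteq> 0" using Gamma_nonzero[OF bZ] .
  have Gb1: "Gamma (\<beta> + 1 + of_nat \<nu>) = b * Gamma b"
    using Gamma_plus1[OF bZ] unfolding b_def by (simp add: add_ac)
  define P where "P = Gamma (\<alpha> + 1) * Gamma b / (Gamma \<delta> * Gamma (\<beta> + 1 + of_nat \<nu>))"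
  have P: "P = Gamma (\<alpha> + 1) / Gamma \<delta> / b" unfolding P_def Gb1 using Gb Gnz bnz0 by (simp add: field_simps)
  have Pnz: "P \<noteq> 0" unfolding P using Gnz bnz0 by simp
  have hterm: "pochhammer (\<alpha> + 1) k * pochhammer b k / (pochhammer \<delta> k * pochhammer (\<beta> + 1 + of_nat \<nu>) k)
        * (- 1 / w) ^ k / fact k = target k / P" for k
  proof -
    have p1: "pochhammer (b + 1) k \<noteq> 0" using poch_nz[OF b1Z] .
    have bk: "b + of_nat k \<noteq> 0" using bnz[of "\<nu> + k"] unfolding b_def by (simp add: add_ac)
    have pd: "pochhammer \<delta> k \<noteq> 0" using poch_nz[OF a4] .
    have key: "pochhammer b k * (b + of_nat k) = b * pochhammer (b + 1) k"
      using pochhammer_Suc[of b k] pochhammer_rec[of b k] by simp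
    have r: "pochhammer b k / pochhammer (b + 1) k = b / (b + of_nat k)"
      using key p1 bk by (simp add: field_simps)
    have e1: "\<beta> + 1 + of_nat \<nu> = b + 1" unfolding b_def by (simp add: add_ac)
    have e2: "\<beta> + of_nat (\<nu> + k) = b + of_nat k" unfolding b_def by (simp add: add_ac)
    have e3: "(- 1 / w) ^ k = (-1)^k * u ^ k" unfolding u_def by (rule e3)
    have "pochhammer (\<alpha> + 1) k * pochhammer b k / (pochhammer \<delta> k * pochhammer (b + 1) k)
        * ((-1)^k * u ^ k) / fact k
        = (pochhammer (\<alpha> + 1) k / (pochhammer \<delta> k * fact k)) * (-1)^k * u^k
           * (pochhammer b k / pochhammer (b + 1) k)"
      by (rule aux2)
    also have "\<dots> = Qc (\<alpha> + 1) \<delta> k * (-1)^k * u^k * b / (b + of_nat k)"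
      unfolding r Qc_def by simp
    also have "\<dots> = target k / P"
    proof -
      have "Gamma (\<alpha> + 1) / Gamma \<delta> \<noteq> 0" using Gnz by simp
      then show ?thesis unfolding target_def P ee_def e2
        using aux1[of "Gamma (\<alpha> + 1) / Gamma \<delta>" "b + of_nat k" b "Qc (\<alpha> + 1) \<delta> k * (-1)^k * u^k"] bnz0 bk
        by (simp add: mult_ac)
    qed
    finally show ?thesis unfolding e1 e3 .
  qed
  have "hypF [\<alpha> + 1, b] [\<delta>, \<beta> + 1 + of_nat \<nu>] (- 1 / w) = (\<Sum>k. target k / P)"
    unfolding hypF_def by (rule suminf_cong) (simp add: hterm[symmetric])
  also have "\<dots> = suminf target / P" by (rule suminf_divide[OF tS])
  finally have "MacRobertE [\<alpha> + 1, b] [\<delta>, \<beta> + 1 + of_nat \<nu>] w = P * (suminf target / P)"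
    unfolding MacRobertE_def P_def by simp
  also have "\<dots> = suminf target" using Pnz by simp
  finally show ?thesis using summable_sums[OF tS] unfolding target_def u_def b_def by simp
qed

lemma cc_Gamma: "Gamma (\<alpha> + \<gamma> + of_nat n) / (fact n * Gamma (\<beta> + of_nat n)) = cc n"
proof -
  have p1: "pochhammer (\<alpha> + \<gamma>) n = Gamma (\<alpha> + \<gamma> + of_nat n) / Gamma (\<alpha> + \<gamma>)"
    using pochhammer_Gamma[OF a2[of 0]] by simp
  have p2: "pochhammer \<beta> n = Gamma (\<beta> + of_nat n) / Gamma \<beta>"
    using pochhammer_Gamma[OF b0] by simp
  have g: "Gamma (\<beta> + of_nat n) \<noteq> 0" using Gamma_nonzero[OF a3[of n]] .
  show ?thesis unfolding cc_def Qc_def p1 p2 using Gnz g by (simp add: field_simps)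
qed

lemma fE_eq:
  assumes w: "w \<noteq> 0"
  shows "fE \<alpha> \<beta> \<gamma> \<delta> w = gg (inverse w)"
proof -
  define u where "u = inverse w"
  define G where "G = (\<lambda>i j. cc i * ee j * u^(i+j) / (\<beta> + of_nat (i+j)))"
  have row: "(\<lambda>k. G \<nu> k) sums (w powi (- int \<nu>) * Gamma (\<alpha> + \<gamma> + of_nat \<nu>)
        / (fact \<nu> * Gamma (\<beta> + of_nat \<nu>))
        * MacRobertE [\<alpha> + 1, \<beta> + of_nat \<nu>] [\<delta>, \<beta> + 1 + of_nat \<nu>] w)" for \<nu>
  proof -
    have pw: "w powi (- int \<nu>) = u ^ \<nu>"
      unfolding u_def by (simp add: power_int_minus power_inverse)
    have "(\<lambda>k. (u^\<nu> * cc \<nu>) * (ee k * inverse w ^ k / (\<beta> + of_nat (\<nu> + k)))) sums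
            ((u^\<nu> * cc \<nu>) * MacRobertE [\<alpha> + 1, \<beta> + of_nat \<nu>] [\<delta>, \<beta> + 1 + of_nat \<nu>] w)"
      by (rule sums_mult[OF inner_E[OF w]])
    moreover have "(u^\<nu> * cc \<nu>) * (ee k * inverse w ^ k / (\<beta> + of_nat (\<nu> + k))) = G \<nu> k" for k
      unfolding G_def u_def by (simp add: power_add mult_ac)
    moreover have "w powi (- int \<nu>) * Gamma (\<alpha> + \<gamma> + of_nat \<nu>) / (fact \<nu> * Gamma (\<beta> + of_nat \<nu>))
        = u^\<nu> * cc \<nu>"
      by (simp only: pw cc_Gamma[symmetric] times_divide_eq_right)
    ultimately show ?thesis by simp
  qed
  obtain m where m: "m > 0" "\<And>n. norm (\<beta> + of_nat n) \<ge> m" using mbound by blast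
  have abs: "(\<lambda>p. norm (G (fst p) (snd p))) summable_on UNIV"
  proof (rule abs_summable_from_product[of "\<lambda>i. norm (cc i * u^i) / m" "\<lambda>j. norm (ee j * u^j)"])
    show "summable (\<lambda>i. norm (cc i * u^i) / m)" by (rule summable_divide) (rule cc_sum)
    show "summable (\<lambda>j. norm (ee j * u^j))" by (rule ee_sum)
    show "0 \<le> norm (cc i * u^i) / m" for i using m by simp
    show "0 \<le> norm (ee j * u^j)" for j by simp
    show "norm (G i j) \<le> norm (cc i * u^i) / m * norm (ee j * u^j)" for i j
    proof -
      have "norm (G i j) = norm (cc i * u^i) * norm (ee j * u^j) / norm (\<beta> + of_nat (i+j))"
        unfolding G_def by (simp add: norm_mult norm_divide norm_power power_add mult_ac)
      also have "\<dots> \<le> norm (cc i * u^i) * norm (ee j * u^j) / m"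
      proof (rule divide_left_mono)
        show "m \<le> norm (\<beta> + of_nat (i+j))" by (rule m(2))
        show "0 < norm (\<beta> + of_nat (i+j)) * m" using m(1) m(2)[of "i+j"] by (intro mult_pos_pos) auto
      qed simp
      finally show ?thesis by simp
    qed
  qed
  obtain X where X1: "(\<lambda>i. \<Sum>j. G i j) sums X" and X2: "(\<lambda>n. \<Sum>i\<le>n. G i (n-i)) sums X"
    using double_series[OF abs] by blast
  have diag: "(\<Sum>i\<le>n. G i (n-i)) = aa n * u^n" for n
  proof -
    have "(\<Sum>i\<le>n. G i (n-i)) = (\<Sum>i\<le>n. cc i * ee (n-i)) * u^n / (\<beta> + of_nat n)"
      unfolding G_def sum_distrib_right sum_divide_distrib by (intro sum.cong refl) auto
    then show ?thesis unfolding aa_def ss_def by simp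
  qed
  have "gg u = X" unfolding gg_def using X2 unfolding diag by (simp add: sums_iff)
  moreover have "fE \<alpha> \<beta> \<gamma> \<delta> w = X"
  proof -
    have "fE \<alpha> \<beta> \<gamma> \<delta> w = (\<Sum>\<nu>. \<Sum>j. G \<nu> j)"
      unfolding fE_def using row by (intro suminf_cong) (simp add: sums_iff)
    then show ?thesis using X1 by (simp add: sums_iff)
  qed
  ultimately show ?thesis unfolding u_def by simp
qed

lemma hyp1_term: "prod_list (map (\<lambda>a. pochhammer a n) [a]) / prod_list (map (\<lambda>b. pochhammer b n) [b]) * y ^ n / fact n
   = Qc a b n * y ^ n"
  unfolding Qc_def by simp

lemma ME1: assumes z: "z \<noteq> 0"
  shows "MacRobertE [\<alpha> + 1] [\<delta>] z = (\<Sum>k. ee k * inverse z ^ k)"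
proof -
  have sm: "summable (\<lambda>k. Qc (\<alpha> + 1) \<delta> k * (- 1 / z) ^ k)"
    by (rule summable_norm_cancel) (rule Qc_summable[OF a4])
  have "MacRobertE [\<alpha> + 1] [\<delta>] z = Gamma (\<alpha> + 1) / Gamma \<delta> * (\<Sum>k. Qc (\<alpha> + 1) \<delta> k * (- 1 / z) ^ k)"
    unfolding MacRobertE_def hypF_def hyp1_term by simp
  also have "\<dots> = (\<Sum>k. Gamma (\<alpha> + 1) / Gamma \<delta> * (Qc (\<alpha> + 1) \<delta> k * (- 1 / z) ^ k))"
    by (rule suminf_mult[OF sm, symmetric])
  also have "\<dots> = (\<Sum>k. ee k * inverse z ^ k)"
    unfolding ee_def e3 by (simp only: mult.assoc mult.left_commute)
  finally show ?thesis .
qed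

lemma ME2: assumes z: "z \<noteq> 0"
  shows "MacRobertE [\<alpha> + \<gamma>] [\<beta>] (- z) = (\<Sum>k. cc k * inverse z ^ k)"
proof -
  have e: "- 1 / - z = inverse z" by (simp add: inverse_eq_divide)
  have sm: "summable (\<lambda>k. Qc (\<alpha> + \<gamma>) \<beta> k * inverse z ^ k)"
    by (rule summable_norm_cancel) (rule Qc_summable[OF b0])
  have "MacRobertE [\<alpha> + \<gamma>] [\<beta>] (- z) = Gamma (\<alpha> + \<gamma>) / Gamma \<beta> * (\<Sum>k. Qc (\<alpha> + \<gamma>) \<beta> k * inverse z ^ k)"
    unfolding MacRobertE_def hypF_def hyp1_term e by simp
  also have "\<dots> = (\<Sum>k. Gamma (\<alpha> + \<gamma>) / Gamma \<beta> * (Qc (\<alpha> + \<gamma>) \<beta> k * inverse z ^ k))"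
    by (rule suminf_mult[OF sm, symmetric])
  also have "\<dots> = (\<Sum>k. cc k * inverse z ^ k)"
    unfolding cc_def by (simp only: mult.assoc)
  finally show ?thesis .
qed

lemma main_ctx:
  assumes z: "z \<noteq> 0"
  shows "(fE \<alpha> \<beta> \<gamma> \<delta>) field_differentiable (at z)
    \<and> - z * deriv (fE \<alpha> \<beta> \<gamma> \<delta>) z + \<beta> * fE \<alpha> \<beta> \<gamma> \<delta> z
      = MacRobertE [\<alpha> + 1] [\<delta>] z * MacRobertE [\<alpha> + \<gamma>] [\<beta>] (- z)"
proof -
  define u where "u = inverse z"
  define D where "D = (\<Sum>n. diffs aa n * u^n)"
  have gd: "(gg has_field_derivative D) (at u)"
    unfolding gg_def D_def by (rule termdiffs_strong_converges_everywhere) (rule aa_summable)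
  have ch: "((\<lambda>w. gg (inverse w)) has_field_derivative D * (- (inverse z ^ Suc (Suc 0)))) (at z)"
    by (rule DERIV_chain2[OF gd[unfolded u_def] DERIV_inverse[OF z]])
  have fd: "(fE \<alpha> \<beta> \<gamma> \<delta> has_field_derivative D * (- (inverse z ^ Suc (Suc 0)))) (at z)"
    by (rule has_field_derivative_transform_within_open[OF ch, of "- {0}"]) (use z fE_eq in auto)
  have diff: "(fE \<alpha> \<beta> \<gamma> \<delta>) field_differentiable (at z)"
    using fd field_differentiable_def by blast
  have der: "deriv (fE \<alpha> \<beta> \<gamma> \<delta>) z = D * (- (inverse z ^ Suc (Suc 0)))"
    by (rule DERIV_imp_deriv[OF fd])
  have lhs: "- z * deriv (fE \<alpha> \<beta> \<gamma> \<delta>) z + \<beta> * fE \<alpha> \<beta> \<gamma> \<delta> z = u * D + \<beta> * gg u"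
    unfolding der fE_eq[OF z] u_def using z by (simp add: field_simps power2_eq_square)
  have Ds: "(\<lambda>n. diffs aa n * u^n) sums D"
    unfolding D_def by (rule summable_sums, rule termdiff_converges_all) (rule aa_summable)
  define h where "h = (\<lambda>n. of_nat n * aa n * u^n)"
  have "(\<lambda>n. h (Suc n)) sums (u * D)"
  proof -
    have "(\<lambda>n. u * (diffs aa n * u^n)) sums (u * D)" by (rule sums_mult[OF Ds])
    moreover have "u * (diffs aa n * u^n) = h (Suc n)" for n
      unfolding h_def diffs_def by (simp add: mult_ac)
    ultimately show ?thesis by simp
  qed
  then have "h sums (u * D + h 0)" by (simp only: sums_Suc_iff)
  then have hs: "h sums (u * D)" by (simp add: h_def)
  have gs: "(\<lambda>n. \<beta> * (aa n * u^n)) sums (\<beta> * gg u)"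
    unfolding gg_def by (rule sums_mult, rule summable_sums) (rule aa_summable)
  have ssum: "(\<lambda>n. ss n * u^n) sums (u * D + \<beta> * gg u)"
  proof -
    have "(\<lambda>n. h n + \<beta> * (aa n * u^n)) sums (u * D + \<beta> * gg u)" by (rule sums_add[OF hs gs])
    moreover have "h n + \<beta> * (aa n * u^n) = ss n * u^n" for n
    proof -
      have "h n + \<beta> * (aa n * u^n) = (\<beta> + of_nat n) * aa n * u^n" unfolding h_def by (simp add: algebra_simps)
      also have "\<dots> = ss n * u^n" unfolding aa_def using bnz[of n] by simp
      finally show ?thesis .
    qed
    ultimately show ?thesis by simp
  qed
  have cp: "(\<lambda>n. ss n * u^n) sums ((\<Sum>k. cc k * u^k) * (\<Sum>k. ee k * u^k))"
    unfolding ss_expand by (rule Cauchy_product_sums) (rule cc_sum, rule ee_sum)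
  have "u * D + \<beta> * gg u = (\<Sum>k. cc k * u^k) * (\<Sum>k. ee k * u^k)"
    using sums_unique2[OF ssum cp] .
  then show ?thesis
    using diff lhs ME1[OF z] ME2[OF z] unfolding u_def by (simp add: mult.commute)
qed

end

theorem mainTheorem1:
  fixes \<alpha> \<beta> \<gamma> \<delta> z :: complex
  assumes "\<alpha> + 1 \<notin> \<int>\<^sub>\<le>\<^sub>0"
    and "\<And>n::nat. \<alpha> + \<gamma> + of_nat n \<notin> \<int>\<^sub>\<le>\<^sub>0"
    and "\<And>n::nat. \<beta> + of_nat n \<notin> \<int>\<^sub>\<le>\<^sub>0"
    and "\<delta> \<notin> \<int>\<^sub>\<le>\<^sub>0"
    and "z \<noteq> 0"
  shows "(fE \<alpha> \<beta> \<gamma> \<delta>) field_differentiable (at z)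
    \<and> - z * deriv (fE \<alpha> \<beta> \<gamma> \<delta>) z + \<beta> * fE \<alpha> \<beta> \<gamma> \<delta> z
      = MacRobertE [\<alpha> + 1] [\<delta>] z * MacRobertE [\<alpha> + \<gamma>] [\<beta>] (- z)"
    by (rule main_ctx[OF assms(1) assms(2) assms(3) assms(4) assms(5)])

end
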